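(* Let $R$ and $R'$ be (not necessarily commutative) subrings of a $\mathbb Q$-algebra, let $\Gamma$ be an order of a number field, let $d\ge1$ be an integer and let $\Gamma'=\mathbb Z[d\Gamma]$ be the subring of $\Gamma$ generated by $d\Gamma$. Suppose $dR'\subseteq R$ and $dR\subseteq R'$. Then the number of $\Gamma$-structures on $R$ is at most $|R'/dR'|$ times the number of $\Gamma'$-structures on $R'$.
   Context: For a ring $A$ and a ring $B$, $\operatorname{Hom}(A,B)$ is the set of ring morphisms $A\to B$; the unit group $B^\times$ acts on it by conjugation. An $A$-structure on $B$ is an element of $\operatorname{Hom}(A,B)/B^\times$. *)

theory Defs
  imports Complex_Main "HOL-Library.FuncSet"
begin

definition is_subring :: "'a::ring_1 set \<Rightarrow> bool" where
  "is_subring S \<longleftrightarrow> 0 \<in> S \<and> 1 \<in> S \<and>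
     (\<forall>x\<in>S. \<forall>y\<in>S. x + y \<in> S \<and> x - y \<in> S \<and> x * y \<in> S)"

definition gen_subring :: "'a::ring_1 set \<Rightarrow> 'a set" where
  "gen_subring X = \<Inter>{T. is_subring T \<and> X \<subseteq> T}"

text \<open>A ring is a Q-algebra iff every positive integer is invertible in it.\<close>
definition Q_algebra :: "'a::ring_1 itself \<Rightarrow> bool" where
  "Q_algebra _ \<longleftrightarrow> (\<forall>n::nat. n > 0 \<longrightarrow>
      (\<exists>y::'a. of_nat n * y = 1 \<and> y * of_nat n = 1))"

text \<open>The field (the whole type) is a number field: finite-dimensional over Q.\<close>
definition number_field :: "'k::field_char_0 itself \<Rightarrow> bool" where
  "number_field _ \<longleftrightarrow> (\<exists>B::'k set. finite B \<and>
      (\<forall>x. \<exists>c. x = (\<Sum>b\<in>B. of_rat (c b) * b)))"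

definition is_order :: "'k::field_char_0 set \<Rightarrow> bool" where
  "is_order G \<longleftrightarrow> is_subring G \<and>
     (\<exists>B. finite B \<and> G = {(\<Sum>b\<in>B. of_int (c b) * b) | c. True}) \<and>
     (\<forall>x. \<exists>n::int. n \<noteq> 0 \<and> of_int n * x \<in> G)"

definition ring_homs :: "'k::ring_1 set \<Rightarrow> 'a::ring_1 set \<Rightarrow> ('k \<Rightarrow> 'a) set" where
  "ring_homs A B = {f. f \<in> A \<rightarrow>\<^sub>E B \<and> f 1 = 1 \<and>
      (\<forall>x\<in>A. \<forall>y\<in>A. f (x + y) = f x + f y \<and> f (x * y) = f x * f y)}"

definition conj_rel :: "'k::ring_1 set \<Rightarrow> 'a::ring_1 set \<Rightarrow> (('k \<Rightarrow> 'a) \<times> ('k \<Rightarrow> 'a)) set" where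
  "conj_rel A B = {(f, g). f \<in> ring_homs A B \<and> g \<in> ring_homs A B \<and>
      (\<exists>u\<in>B. \<exists>v\<in>B. u * v = 1 \<and> v * u = 1 \<and> (\<forall>x\<in>A. g x = u * f x * v))}"

definition structures :: "'k::ring_1 set \<Rightarrow> 'a::ring_1 set \<Rightarrow> ('k \<Rightarrow> 'a) set set" where
  "structures A B = ring_homs A B // conj_rel A B"

definition quot_mult :: "'a::ring_1 set \<Rightarrow> nat \<Rightarrow> 'a set set" where
  "quot_mult B d = B // {(x, y). x \<in> B \<and> y \<in> B \<and> (\<exists>r\<in>B. x - y = of_nat d * r)}"

end

theory Submission
  imports Defs
begin

lemma conj_equiv:
  assumes B: "is_subring B"
  shows "equiv (ring_homs A B) (conj_rel A B)"
proof (rule equivI)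
  show "refl_on (ring_homs A B) (conj_rel A B)"
    unfolding refl_on_def conj_rel_def using B by (auto simp: is_subring_def intro!: bexI[of _ 1])
next
  show "sym (conj_rel A B)"
  proof (rule symI)
    fix f g assume "(f, g) \<in> conj_rel A B"
    then obtain u v where uv: "f \<in> ring_homs A B" "g \<in> ring_homs A B" "u \<in> B" "v \<in> B"
      "u * v = 1" "v * u = 1" "\<forall>x\<in>A. g x = u * f x * v" unfolding conj_rel_def by auto
    have "\<forall>x\<in>A. f x = v * g x * u"
    proof
      fix x assume "x \<in> A"
      then have "v * g x * u = v * (u * f x * v) * u" using uv by simp
      then show "f x = v * g x * u" using uv by (metis mult.assoc mult_1_left mult_1_right)
    qed
    then show "(g, f) \<in> conj_rel A B" unfolding conj_rel_def using uv by blast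
  qed
next
  show "trans (conj_rel A B)"
  proof (rule transI)
    fix f g h assume "(f, g) \<in> conj_rel A B" "(g, h) \<in> conj_rel A B"
    then obtain u v u' v' where uv: "f \<in> ring_homs A B" "g \<in> ring_homs A B" "h \<in> ring_homs A B"
      "u \<in> B" "v \<in> B"
      "u * v = 1" "v * u = 1" "\<forall>x\<in>A. g x = u * f x * v"
      "u' \<in> B" "v' \<in> B"
      "u' * v' = 1" "v' * u' = 1" "\<forall>x\<in>A. h x = u' * g x * v'" unfolding conj_rel_def by auto
    have "u' * u \<in> B" "v * v' \<in> B" using uv B unfolding is_subring_def by auto
    moreover have "(u' * u) * (v * v') = 1"
      by (metis uv(6,11) mult.assoc mult_1_right)
    moreover have "(v * v') * (u' * u) = 1"
      by (metis uv(7,12) mult.assoc mult_1_right)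
    moreover have "\<forall>x\<in>A. h x = (u' * u) * f x * (v * v')" using uv by (simp add: mult.assoc)
    ultimately show "(f, h) \<in> conj_rel A B" unfolding conj_rel_def using uv by blast
  qed
qed (auto simp: conj_rel_def)

lemma hom_props:
  assumes f: "f \<in> ring_homs A B" and A: "is_subring A"
  shows "f 0 = 0" "x \<in> A \<Longrightarrow> y \<in> A \<Longrightarrow> f (x - y) = f x - f y"
    "x \<in> A \<Longrightarrow> of_nat n * x \<in> A \<and> f (of_nat n * x) = of_nat n * f x"
proof -
  have add: "\<And>x y. x \<in> A \<Longrightarrow> y \<in> A \<Longrightarrow> f (x + y) = f x + f y" using f unfolding ring_homs_def by auto
  have z: "0 \<in> A" using A unfolding is_subring_def by auto
  show f0: "f 0 = 0" using add[OF z z] by simp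
  show "x \<in> A \<Longrightarrow> y \<in> A \<Longrightarrow> f (x - y) = f x - f y"
  proof -
    assume "x \<in> A" "y \<in> A"
    then have "x - y \<in> A" using A unfolding is_subring_def by auto
    then have "f (x - y + y) = f (x - y) + f y" using \<open>y \<in> A\<close> by (rule add)
    then show ?thesis by (simp add: algebra_simps)
  qed
  show "x \<in> A \<Longrightarrow> of_nat n * x \<in> A \<and> f (of_nat n * x) = of_nat n * f x"
  proof (induction n)
    case 0 then show ?case using A f0 unfolding is_subring_def by auto
  next
    case (Suc n)
    have e: "of_nat (Suc n) * x = x + of_nat n * x" by (simp add: algebra_simps)
    show ?case unfolding e using Suc add A unfolding is_subring_def by (auto simp: algebra_simps)
  qed
qed

lemma subring_ofnat: "is_subring A \<Longrightarrow> x \<in> A \<Longrightarrow> of_nat n * x \<in> A"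
proof (induction n)
  case 0 then show ?case unfolding is_subring_def by auto
next
  case (Suc n)
  have e: "of_nat (Suc n) * x = x + of_nat n * x" by (simp add: algebra_simps)
  show ?case unfolding e using Suc unfolding is_subring_def by auto
qed

lemma class_rep:
  assumes "equiv A r" "X \<in> A // r" "x \<in> X" shows "X = r `` {x}"
proof -
  from assms(2) obtain a where a: "X = r `` {a}" "a \<in> A" by (auto elim: quotientE)
  then have "(a, x) \<in> r" using assms(3) by auto
  then show ?thesis using a equiv_class_eq[OF assms(1)] by metis
qed

lemma gen_subring_is: "is_subring (gen_subring X)"
  unfolding gen_subring_def is_subring_def by auto

lemma gen_subring_sub: "is_subring T \<Longrightarrow> X \<subseteq> T \<Longrightarrow> gen_subring X \<subseteq> T"
  unfolding gen_subring_def by auto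

lemma gen_subring_incl: "X \<subseteq> gen_subring X"
  unfolding gen_subring_def by auto

theorem proposition10p8:
  fixes R R' :: "'a::ring_1 set" and \<Gamma> :: "'k::field_char_0 set" and d :: nat
  assumes "Q_algebra TYPE('a)"
    and "is_subring R" and "is_subring R'"
    and "number_field TYPE('k)" and "is_order \<Gamma>"
    and "d \<ge> 1"
    and "(\<lambda>r. of_nat d * r) ` R' \<subseteq> R"
    and "(\<lambda>r. of_nat d * r) ` R \<subseteq> R'"
  shows "\<exists>F. inj_on F (structures \<Gamma> R) \<and>
           F ` structures \<Gamma> R \<subseteq>
             quot_mult R' d \<times> structures (gen_subring ((\<lambda>g. of_nat d * g) ` \<Gamma>)) R'"
proof -
  note QA = assms(1) and SR = assms(2) and SR' = assms(3) and dR' = assms(7) and dR = assms(8)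
  have SG: "is_subring \<Gamma>" using assms(5) unfolding is_order_def by auto
  define G' where "G' = gen_subring ((\<lambda>g. of_nat d * g) ` \<Gamma>)"
  have SG': "is_subring G'" unfolding G'_def by (rule gen_subring_is)
  have G'sub: "G' \<subseteq> \<Gamma>" unfolding G'_def
    by (rule gen_subring_sub[OF SG]) (use subring_ofnat[OF SG] in \<open>auto\<close>)
  have dG: "\<And>g. g \<in> \<Gamma> \<Longrightarrow> of_nat d * g \<in> G'" unfolding G'_def using gen_subring_incl by blast
  obtain y :: 'a where y: "of_nat d * y = 1" "y * of_nat d = 1"
    using QA assms(6) unfolding Q_algebra_def by (metis less_le_trans zero_less_one)
  define E where "E = {(x, y). x \<in> R' \<and> y \<in> R' \<and> (\<exists>r\<in>R'. x - y = (of_nat d :: 'a) * r)}"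
  have eqR: "equiv (ring_homs \<Gamma> R) (conj_rel \<Gamma> R)" by (rule conj_equiv[OF SR])
  have eqR': "equiv (ring_homs G' R') (conj_rel G' R')" by (rule conj_equiv[OF SR'])
  have resth: "restrict f G' \<in> ring_homs G' R'" if f: "f \<in> ring_homs \<Gamma> R" for f
  proof -
    let ?T = "{x \<in> \<Gamma>. f x \<in> R'}"
    have fR: "\<And>x. x \<in> \<Gamma> \<Longrightarrow> f x \<in> R" using f unfolding ring_homs_def by auto
    have fa: "\<And>x y. x \<in> \<Gamma> \<Longrightarrow> y \<in> \<Gamma> \<Longrightarrow> f (x + y) = f x + f y \<and> f (x * y) = f x * f y"
      using f unfolding ring_homs_def by auto
    have "is_subring ?T"
      unfolding is_subring_def
    proof (intro conjI ballI)
      show "0 \<in> ?T" using hom_props(1)[OF f SG] SG SR' unfolding is_subring_def by auto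
      show "1 \<in> ?T" using f SG SR' unfolding is_subring_def ring_homs_def by auto
      fix a b assume a: "a \<in> ?T" and b: "b \<in> ?T"
      show "a + b \<in> ?T" using a b fa SG SR' unfolding is_subring_def by auto
      show "a * b \<in> ?T" using a b fa SG SR' unfolding is_subring_def by auto
      show "a - b \<in> ?T" using a b hom_props(2)[OF f SG] SG SR' unfolding is_subring_def by auto
    qed
    moreover have "(\<lambda>g. of_nat d * g) ` \<Gamma> \<subseteq> ?T"
      using hom_props(3)[OF f SG] fR dR by auto
    ultimately have "G' \<subseteq> ?T" unfolding G'_def by (rule gen_subring_sub)
    then have GG: "\<And>x. x \<in> G' \<Longrightarrow> x \<in> \<Gamma> \<and> f x \<in> R'" by blast
    show ?thesis using f SG' GG unfolding ring_homs_def is_subring_def by (auto simp: PiE_iff)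
  qed
  define fc :: "('k \<Rightarrow> 'a) set \<Rightarrow> 'k \<Rightarrow> 'a" where "fc c = (SOME f. f \<in> c)" for c
  define res where "res c = restrict (fc c) G'" for c
  define Oc :: "('k \<Rightarrow> 'a) set \<Rightarrow> ('k \<Rightarrow> 'a) set" where "Oc c = conj_rel G' R' `` {res c}" for c
  define h :: "('k \<Rightarrow> 'a) set \<Rightarrow> 'k \<Rightarrow> 'a" where "h c = (SOME h. h \<in> Oc c)" for c
  define uc :: "('k \<Rightarrow> 'a) set \<Rightarrow> 'a" where "uc c = (SOME u. u \<in> R' \<and> (\<exists>v\<in>R'. u*v=1 \<and> v*u=1 \<and> (\<forall>x\<in>G'. res c x = u * h c x * v)))" for c
  define F where "F c = (E `` {uc c}, Oc c)" for c
  have facts: "fc c \<in> c \<and> fc c \<in> ring_homs \<Gamma> R \<and> res c \<in> ring_homs G' R' \<and> h c \<in> Oc c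
      \<and> uc c \<in> R' \<and> (\<exists>v\<in>R'. uc c*v=1 \<and> v*uc c=1 \<and> (\<forall>x\<in>G'. res c x = uc c * h c x * v))"
    if c: "c \<in> structures \<Gamma> R" for c
  proof -
    from c obtain f where cf: "c = conj_rel \<Gamma> R `` {f}" "f \<in> ring_homs \<Gamma> R"
      unfolding structures_def by (auto elim: quotientE)
    have "f \<in> c" using cf equiv_class_self[OF eqR] by auto
    then have fc: "fc c \<in> c" unfolding fc_def by (metis someI)
    then have fcR: "fc c \<in> ring_homs \<Gamma> R" using cf unfolding conj_rel_def by auto
    have rr: "res c \<in> ring_homs G' R'" unfolding res_def by (rule resth[OF fcR])
    have "res c \<in> Oc c" unfolding Oc_def using equiv_class_self[OF eqR' rr] .
    then have hc: "h c \<in> Oc c" unfolding h_def by (metis someI)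
    then have "(res c, h c) \<in> conj_rel G' R'" unfolding Oc_def by auto
    then have "(h c, res c) \<in> conj_rel G' R'" using eqR' unfolding equiv_def by (auto elim: symE)
    then have "\<exists>u. u \<in> R' \<and> (\<exists>v\<in>R'. u*v=1 \<and> v*u=1 \<and> (\<forall>x\<in>G'. res c x = u * h c x * v))"
      unfolding conj_rel_def by auto
    then have "uc c \<in> R' \<and> (\<exists>v\<in>R'. uc c*v=1 \<and> v*uc c=1 \<and> (\<forall>x\<in>G'. res c x = uc c * h c x * v))"
      unfolding uc_def by (rule someI_ex)
    then show ?thesis using fc fcR rr hc by blast
  qed
  have "F ` structures \<Gamma> R \<subseteq> quot_mult R' d \<times> structures G' R'"
  proof
    fix p assume "p \<in> F ` structures \<Gamma> R"
    then obtain c where c: "c \<in> structures \<Gamma> R" "p = F c" by auto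
    have qm: "quot_mult R' d = R' // E" unfolding quot_mult_def E_def by simp
    have "E `` {uc c} \<in> quot_mult R' d" unfolding qm
      using facts[OF c(1)] by (intro quotientI) blast
    moreover have "Oc c \<in> structures G' R'" unfolding structures_def Oc_def
      using facts[OF c(1)] by (auto intro: quotientI)
    ultimately show "p \<in> quot_mult R' d \<times> structures G' R'" using c unfolding F_def by auto
  qed
  moreover have "inj_on F (structures \<Gamma> R)"
  proof (rule inj_onI)
    fix c1 c2 assume c1: "c1 \<in> structures \<Gamma> R" and c2: "c2 \<in> structures \<Gamma> R" and Feq: "F c1 = F c2"
    have Oeq: "Oc c1 = Oc c2" and Eeq: "E `` {uc c1} = E `` {uc c2}" using Feq unfolding F_def by auto
    have heq: "h c1 = h c2" unfolding h_def Oeq ..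
    note f1 = facts[OF c1] and f2 = facts[OF c2]
    define u1 where "u1 = uc c1"
    define u2 where "u2 = uc c2"
    obtain v1 where v1: "v1 \<in> R'" "u1*v1=1" "v1*u1=1" "\<forall>x\<in>G'. res c1 x = u1 * h c1 x * v1"
      using f1 unfolding u1_def by blast
    obtain v2 where v2: "v2 \<in> R'" "u2*v2=1" "v2*u2=1" "\<forall>x\<in>G'. res c2 x = u2 * h c1 x * v2"
      using f2 heq unfolding u2_def by auto
    have u1R: "u1 \<in> R'" and u2R: "u2 \<in> R'" using f1 f2 unfolding u1_def u2_def by auto
    have "u2 \<in> E `` {u2}" unfolding E_def using u2R SR' unfolding is_subring_def by (auto intro!: bexI[of _ 0])
    then have "(u1, u2) \<in> E" using Eeq unfolding u1_def u2_def by auto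
    then obtain r where r: "r \<in> R'" "u1 - u2 = of_nat d * r" unfolding E_def by auto
    define w where "w = u2 * v1"
    define wi where "wi = u1 * v2"
    have "r * v1 \<in> R'" "r * v2 \<in> R'" using r v1 v2 SR' unfolding is_subring_def by auto
    then have drv: "of_nat d * (r * v1) \<in> R" "of_nat d * (r * v2) \<in> R" using dR' by auto
    have "w = (u1 - of_nat d * r) * v1" unfolding w_def using r by (simp add: algebra_simps)
    also have "\<dots> = 1 - of_nat d * (r * v1)" using v1 by (simp add: algebra_simps)
    finally have wR: "w \<in> R" using drv SR unfolding is_subring_def by auto
    have "wi = (u2 + of_nat d * r) * v2" unfolding wi_def using r by (simp add: algebra_simps)
    also have "\<dots> = 1 + of_nat d * (r * v2)" using v2 by (simp add: algebra_simps)
    finally have wiR: "wi \<in> R" using drv SR unfolding is_subring_def by auto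
    have wwi: "w * wi = 1" unfolding w_def wi_def
      by (metis v1(3) v2(2) mult.assoc mult_1_left)
    have wiw: "wi * w = 1" unfolding w_def wi_def
      by (metis v1(2) v2(3) mult.assoc mult_1_left)
    have onG': "res c2 x = w * res c1 x * wi" if x: "x \<in> G'" for x
    proof -
      have "w * res c1 x * wi = u2 * (v1 * u1) * h c1 x * (v1 * u1) * v2"
        unfolding w_def wi_def using v1(4) x by (simp add: mult.assoc)
      then show ?thesis using v1 v2 x by simp
    qed
    let ?f1 = "fc c1" and ?f2 = "fc c2"
    have h1: "?f1 \<in> ring_homs \<Gamma> R" and h2: "?f2 \<in> ring_homs \<Gamma> R" using f1 f2 by blast+
    have "\<forall>x\<in>\<Gamma>. ?f2 x = w * ?f1 x * wi"
    proof
      fix x assume x: "x \<in> \<Gamma>"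
      have dx: "of_nat d * x \<in> G'" using dG[OF x] .
      have "of_nat d * ?f2 x = ?f2 (of_nat d * x)" using hom_props(3)[OF h2 SG x] by simp
      also have "\<dots> = res c2 (of_nat d * x)" unfolding res_def using dx by simp
      also have "\<dots> = w * res c1 (of_nat d * x) * wi" using onG'[OF dx] .
      also have "\<dots> = w * ?f1 (of_nat d * x) * wi" unfolding res_def using dx by simp
      also have "\<dots> = w * (of_nat d * ?f1 x) * wi" using hom_props(3)[OF h1 SG x] by simp
      also have "\<dots> = of_nat d * (w * ?f1 x * wi)" by (metis mult.assoc mult_of_nat_commute)
      finally have "y * (of_nat d * ?f2 x) = y * (of_nat d * (w * ?f1 x * wi))" by simp
      then show "?f2 x = w * ?f1 x * wi" using y by (metis mult.assoc mult_1_left)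
    qed
    then have "(?f1, ?f2) \<in> conj_rel \<Gamma> R" unfolding conj_rel_def using f1 f2 wR wiR wwi wiw by blast
    moreover have "c1 = conj_rel \<Gamma> R `` {?f1}" "c2 = conj_rel \<Gamma> R `` {?f2}"
      using c1 c2 f1 f2 class_rep[OF eqR] unfolding structures_def by blast+
    ultimately show "c1 = c2" using eqR by (metis equiv_class_eq_iff)
  qed
  ultimately show ?thesis unfolding G'_def by blast
qed

end
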